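(* In an efficient enhanced Gelfand--Zetlin pattern, the set of edges is uniquely determined by the underlying Gelfand--Zetlin pattern and the set of encircled entries. That is, two efficient enhanced patterns with the same entries and the same encircled entries have the same edges.
   Context: Let $\lambda=(\lambda_1\ge\dots\ge\lambda_n)$ be a partition. A GZ pattern with top row $\lambda$ is an integer array $a_{ij}$, $0\le i\le n-1$, $1\le j\le n-i$, with $a_{0j}=\lambda_{n+1-j}$ and $a_{i-1,j}\le a_{ij}\le a_{i-1,j+1}$ ($a_{ij}$ sits below $a_{i-1,j}$ and $a_{i-1,j+1}$). An enhanced GZ pattern is such an array with a set of encircled entries and a set of edges, each joining an $a_{ij}$ ($i\ge1$) with $a_{i-1,j}$ or $a_{i-1,j+1}$, such that: (1) row $0$ entries are encircled; (2) entries joined by an edge are equal and the lower one is encircled; (3) for $i\ge1$, $1\le j\le n-i-1$: both $a_{ij},a_{i,j+1}$ are joined to $a_{i-1,j+1}$ iff both are joined to $a_{i+1,j}$; (4) if $a_{0j}=a_{0,j+1}$ then $a_{1j}$ is encircled and joined to both; (5) if $a_{i-1,j}<a_{i-1,j+1}$ and $a_{ij}=a_{i-1,j}$, then $a_{ij}$ is encircled and joined to $a_{i-1,j}$; (6) if $a_{i-1,j}<a_{i-1,j+1}$, $a_{ij}=a_{i-1,j+1}$ and $a_{ij}$ is encircled, then it is joined to $a_{i-1,j+1}$; (7) if $a_{i-1,j}=a_{i-1,j+1}=a_{ij}$ and $a_{i-1,j},a_{i-1,j+1}$ can be connected by a path of edges, then $a_{ij}$ is encircled and joined to both; (8) if $a_{i-1,j}=a_{i-1,j+1}=a_{ij}$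 and $a_{ij}$ is encircled, then it is joined to at least one of them. The pattern is inefficient if it contains $a_{i-1,j}=a_{i-1,j+1}=a_{ij}$ with no edge between $a_{ij}$ and $a_{i-1,j+1}$, and efficient otherwise. *)

theory Defs
  imports Main
begin

text \<open>Positions are pairs (i,j) with 0 <= i <= n-1, 1 <= j <= n-i.
  The partition lambda is given as a function on indices 1..n.
  An edge is recorded as the ordered pair (lower entry, upper entry),
  i.e. ((i,j),(i-1,j)) or ((i,j),(i-1,j+1)) with i >= 1.\<close>

definition is_partition :: "nat \<Rightarrow> (nat \<Rightarrow> int) \<Rightarrow> bool" where
  "is_partition n lam \<longleftrightarrow>
     (\<forall>k. 1 \<le> k \<and> k < n \<longrightarrow> lam k \<ge> lam (k+1)) \<and>
     (\<forall>k. 1 \<le> k \<and> k \<le> n \<longrightarrow> lam k \<ge> 0)"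

definition in_pattern :: "nat \<Rightarrow> nat \<times> nat \<Rightarrow> bool" where
  "in_pattern n p \<longleftrightarrow> fst p < n \<and> 1 \<le> snd p \<and> snd p \<le> n - fst p"

definition GZ_pattern :: "nat \<Rightarrow> (nat \<Rightarrow> int) \<Rightarrow> (nat \<Rightarrow> nat \<Rightarrow> int) \<Rightarrow> bool" where
  "GZ_pattern n lam a \<longleftrightarrow>
     (\<forall>j. 1 \<le> j \<and> j \<le> n \<longrightarrow> a 0 j = lam (n + 1 - j)) \<and>
     (\<forall>i j. 1 \<le> i \<and> i < n \<and> 1 \<le> j \<and> j \<le> n - i \<longrightarrow>
        a (i-1) j \<le> a i j \<and> a i j \<le> a (i-1) (j+1))"

definition valid_edge :: "nat \<Rightarrow> (nat \<times> nat) \<times> (nat \<times> nat) \<Rightarrow> bool" where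
  "valid_edge n e \<longleftrightarrow>
     (\<exists>i j. 1 \<le> i \<and> i < n \<and> 1 \<le> j \<and> j \<le> n - i \<and>
        (e = ((i,j),(i-1,j)) \<or> e = ((i,j),(i-1,j+1))))"

definition edge_connected ::
  "((nat \<times> nat) \<times> (nat \<times> nat)) set \<Rightarrow> nat \<times> nat \<Rightarrow> nat \<times> nat \<Rightarrow> bool" where
  "edge_connected E p q \<longleftrightarrow> (p, q) \<in> (E \<union> E\<inverse>)\<^sup>*"

definition enhanced_GZ ::
  "nat \<Rightarrow> (nat \<Rightarrow> int) \<Rightarrow> (nat \<Rightarrow> nat \<Rightarrow> int) \<Rightarrow> (nat \<times> nat) set
     \<Rightarrow> ((nat \<times> nat) \<times> (nat \<times> nat)) set \<Rightarrow> bool" where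
  "enhanced_GZ n lam a C E \<longleftrightarrow>
     GZ_pattern n lam a \<and>
     (\<forall>p\<in>C. in_pattern n p) \<and>
     (\<forall>e\<in>E. valid_edge n e) \<and>
     \<comment> \<open>(1)\<close>
     (\<forall>j. 1 \<le> j \<and> j \<le> n \<longrightarrow> (0, j) \<in> C) \<and>
     \<comment> \<open>(2)\<close>
     (\<forall>i j k l. ((i,j),(k,l)) \<in> E \<longrightarrow> a i j = a k l \<and> (i,j) \<in> C) \<and>
     \<comment> \<open>(3)\<close>
     (\<forall>i j. 1 \<le> i \<and> 1 \<le> j \<and> j + 1 \<le> n - i \<longrightarrow>
        ((((i,j),(i-1,j+1)) \<in> E \<and> ((i,j+1),(i-1,j+1)) \<in> E) \<longleftrightarrow>
         (((i+1,j),(i,j)) \<in> E \<and> ((i+1,j),(i,j+1)) \<in> E))) \<and>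
     \<comment> \<open>(4)\<close>
     (\<forall>j. 1 \<le> j \<and> j + 1 \<le> n \<and> a 0 j = a 0 (j+1) \<longrightarrow>
        (1,j) \<in> C \<and> ((1,j),(0,j)) \<in> E \<and> ((1,j),(0,j+1)) \<in> E) \<and>
     \<comment> \<open>(5)\<close>
     (\<forall>i j. 1 \<le> i \<and> i < n \<and> 1 \<le> j \<and> j \<le> n - i \<and>
        a (i-1) j < a (i-1) (j+1) \<and> a i j = a (i-1) j \<longrightarrow>
        (i,j) \<in> C \<and> ((i,j),(i-1,j)) \<in> E) \<and>
     \<comment> \<open>(6)\<close>
     (\<forall>i j. 1 \<le> i \<and> i < n \<and> 1 \<le> j \<and> j \<le> n - i \<and>
        a (i-1) j < a (i-1) (j+1) \<and> a i j = a (i-1) (j+1) \<and> (i,j) \<in> C \<longrightarrow>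
        ((i,j),(i-1,j+1)) \<in> E) \<and>
     \<comment> \<open>(7)\<close>
     (\<forall>i j. 1 \<le> i \<and> i < n \<and> 1 \<le> j \<and> j \<le> n - i \<and>
        a (i-1) j = a (i-1) (j+1) \<and> a i j = a (i-1) j \<and>
        edge_connected E (i-1,j) (i-1,j+1) \<longrightarrow>
        (i,j) \<in> C \<and> ((i,j),(i-1,j)) \<in> E \<and> ((i,j),(i-1,j+1)) \<in> E) \<and>
     \<comment> \<open>(8)\<close>
     (\<forall>i j. 1 \<le> i \<and> i < n \<and> 1 \<le> j \<and> j \<le> n - i \<and>
        a (i-1) j = a (i-1) (j+1) \<and> a i j = a (i-1) j \<and> (i,j) \<in> C \<longrightarrow>
        ((i,j),(i-1,j)) \<in> E \<or> ((i,j),(i-1,j+1)) \<in> E)"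

definition efficient ::
  "nat \<Rightarrow> (nat \<Rightarrow> nat \<Rightarrow> int) \<Rightarrow> ((nat \<times> nat) \<times> (nat \<times> nat)) set \<Rightarrow> bool" where
  "efficient n a E \<longleftrightarrow>
     \<not> (\<exists>i j. 1 \<le> i \<and> i < n \<and> 1 \<le> j \<and> j \<le> n - i \<and>
        a (i-1) j = a (i-1) (j+1) \<and> a i j = a (i-1) j \<and>
        ((i,j),(i-1,j+1)) \<notin> E)"

end

theory Submission
  imports Defs
begin

lemma egc_gz: assumes "enhanced_GZ n lam a C E" shows "GZ_pattern n lam a"
  using assms unfolding enhanced_GZ_def by (elim conjE) assumption

lemma egc2: assumes "enhanced_GZ n lam a C E" shows "\<forall>i j k l. ((i,j),(k,l)) \<in> E \<longrightarrow> a i j = a k l \<and> (i,j) \<in> C"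
  using assms unfolding enhanced_GZ_def by (elim conjE) assumption

lemma egc3: assumes "enhanced_GZ n lam a C E" shows "\<forall>i j. 1 \<le> i \<and> 1 \<le> j \<and> j + 1 \<le> n - i \<longrightarrow>
        ((((i,j),(i-1,j+1)) \<in> E \<and> ((i,j+1),(i-1,j+1)) \<in> E) \<longleftrightarrow>
         (((i+1,j),(i,j)) \<in> E \<and> ((i+1,j),(i,j+1)) \<in> E))"
  using assms unfolding enhanced_GZ_def by (elim conjE) assumption

lemma egc4: assumes "enhanced_GZ n lam a C E" shows "\<forall>j. 1 \<le> j \<and> j + 1 \<le> n \<and> a 0 j = a 0 (j+1) \<longrightarrow>
        (1,j) \<in> C \<and> ((1,j),(0,j)) \<in> E \<and> ((1,j),(0,j+1)) \<in> E"
  using assms unfolding enhanced_GZ_def by (elim conjE) assumption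

lemma egc5: assumes "enhanced_GZ n lam a C E" shows "\<forall>i j. 1 \<le> i \<and> i < n \<and> 1 \<le> j \<and> j \<le> n - i \<and>
        a (i-1) j < a (i-1) (j+1) \<and> a i j = a (i-1) j \<longrightarrow>
        (i,j) \<in> C \<and> ((i,j),(i-1,j)) \<in> E"
  using assms unfolding enhanced_GZ_def by (elim conjE) assumption

lemma egc6: assumes "enhanced_GZ n lam a C E" shows "\<forall>i j. 1 \<le> i \<and> i < n \<and> 1 \<le> j \<and> j \<le> n - i \<and>
        a (i-1) j < a (i-1) (j+1) \<and> a i j = a (i-1) (j+1) \<and> (i,j) \<in> C \<longrightarrow>
        ((i,j),(i-1,j+1)) \<in> E"
  using assms unfolding enhanced_GZ_def by (elim conjE) assumption

lemma eg_g: "enhanced_GZ n lam a C E \<Longrightarrow> 1 \<le> i \<Longrightarrow> i < n \<Longrightarrow> 1 \<le> j \<Longrightarrow> j \<le> n - i \<Longrightarrow>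
   a (i-1) j \<le> a i j \<and> a i j \<le> a (i-1) (j+1)"
proof -
  assume h: "enhanced_GZ n lam a C E" "1 \<le> i" "i < n" "1 \<le> j" "j \<le> n - i"
  have "\<forall>i j. 1 \<le> i \<and> i < n \<and> 1 \<le> j \<and> j \<le> n - i \<longrightarrow>
        a (i-1) j \<le> a i j \<and> a i j \<le> a (i-1) (j+1)"
    using egc_gz[OF h(1)] unfolding GZ_pattern_def by (elim conjE) assumption
  thus ?thesis using h(2-5) by blast
qed
lemma eg2: "enhanced_GZ n lam a C E \<Longrightarrow> ((i,j),(k,l)) \<in> E \<Longrightarrow> a i j = a k l \<and> (i,j) \<in> C"
  using egc2 by blast
lemma eg3: "enhanced_GZ n lam a C E \<Longrightarrow> 1 \<le> i \<Longrightarrow> 1 \<le> j \<Longrightarrow> j + 1 \<le> n - i \<Longrightarrow>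
        ((((i,j),(i-1,j+1)) \<in> E \<and> ((i,j+1),(i-1,j+1)) \<in> E) \<longleftrightarrow>
         (((i+1,j),(i,j)) \<in> E \<and> ((i+1,j),(i,j+1)) \<in> E))"
  using egc3 by blast
lemma eg4: "enhanced_GZ n lam a C E \<Longrightarrow> 1 \<le> j \<Longrightarrow> j + 1 \<le> n \<Longrightarrow> a 0 j = a 0 (j+1) \<Longrightarrow>
        ((1,j),(0,j)) \<in> E"
  using egc4 by blast
lemma eg5: "enhanced_GZ n lam a C E \<Longrightarrow> 1 \<le> i \<Longrightarrow> i < n \<Longrightarrow> 1 \<le> j \<Longrightarrow> j \<le> n - i \<Longrightarrow>
        a (i-1) j < a (i-1) (j+1) \<Longrightarrow> a i j = a (i-1) j \<Longrightarrow> ((i,j),(i-1,j)) \<in> E"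
  using egc5 by blast
lemma eg6: "enhanced_GZ n lam a C E \<Longrightarrow> 1 \<le> i \<Longrightarrow> i < n \<Longrightarrow> 1 \<le> j \<Longrightarrow> j \<le> n - i \<Longrightarrow>
        a (i-1) j < a (i-1) (j+1) \<Longrightarrow> a i j = a (i-1) (j+1) \<Longrightarrow> (i,j) \<in> C \<Longrightarrow>
        ((i,j),(i-1,j+1)) \<in> E"
  using egc6 by blast
lemma effD: "efficient n a E \<Longrightarrow> 1 \<le> i \<Longrightarrow> i < n \<Longrightarrow> 1 \<le> j \<Longrightarrow> j \<le> n - i \<Longrightarrow>
        a (i-1) j = a (i-1) (j+1) \<Longrightarrow> a i j = a (i-1) j \<Longrightarrow> ((i,j),(i-1,j+1)) \<in> E"
  unfolding efficient_def by blast

lemma charR: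
  assumes "enhanced_GZ n lam a C E" "efficient n a E"
    "1 \<le> i" "i < n" "1 \<le> j" "j \<le> n - i"
  shows "((i,j),(i-1,j+1)) \<in> E \<longleftrightarrow> a i j = a (i-1) (j+1) \<and> (i,j) \<in> C"
proof -
  have g: "a (i-1) j \<le> a i j \<and> a i j \<le> a (i-1) (j+1)"
    using eg_g[OF assms(1,3-6)] .
  show ?thesis
  proof
    assume "((i,j),(i-1,j+1)) \<in> E" thus "a i j = a (i-1) (j+1) \<and> (i,j) \<in> C"
      using eg2[OF assms(1)] by blast
  next
    assume h: "a i j = a (i-1) (j+1) \<and> (i,j) \<in> C"
    show "((i,j),(i-1,j+1)) \<in> E"
    proof (cases "a (i-1) j < a (i-1) (j+1)")
      case True thus ?thesis using eg6[OF assms(1,3-6)] h by blast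
    next
      case False
      hence "a (i-1) j = a (i-1) (j+1)" "a i j = a (i-1) j" using g by auto
      thus ?thesis using effD[OF assms(2-6)] by blast
    qed
  qed
qed

lemma charL:
  assumes "enhanced_GZ n lam a C E" "efficient n a E"
    "1 \<le> i" "i < n" "1 \<le> j" "j \<le> n - i"
  shows "((i,j),(i-1,j)) \<in> E \<longleftrightarrow>
    (if a (i-1) j < a (i-1) (j+1) then a i j = a (i-1) j
     else if i = 1 then True
     else ((i-1,j),(i-2,j+1)) \<in> E \<and> ((i-1,j+1),(i-2,j+1)) \<in> E)"
proof -
  have g: "a (i-1) j \<le> a i j \<and> a i j \<le> a (i-1) (j+1)"
    using eg_g[OF assms(1,3-6)] .
  show ?thesis
  proof (cases "a (i-1) j < a (i-1) (j+1)")
    case True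
    have "((i,j),(i-1,j)) \<in> E \<longleftrightarrow> a i j = a (i-1) j"
      using eg5[OF assms(1,3-6) True] eg2[OF assms(1), of i j "i-1" j] by blast
    then show ?thesis using True by simp
  next
    case False
    hence eq: "a (i-1) j = a (i-1) (j+1)" "a i j = a (i-1) j" using g by auto
    have R: "((i,j),(i-1,j+1)) \<in> E" using effD[OF assms(2-6) eq] .
    show ?thesis
    proof (cases "i = 1")
      case True
      have "((1,j),(0,j)) \<in> E" using eg4[OF assms(1), of j] assms eq True by simp
      then show ?thesis using True False by simp
    next
      case i1: False
      have 3: "(((i-1,j),(i-1-1,j+1)) \<in> E \<and> ((i-1,j+1),(i-1-1,j+1)) \<in> E) \<longleftrightarrow>
         (((i-1+1,j),(i-1,j)) \<in> E \<and> ((i-1+1,j),(i-1,j+1)) \<in> E)"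
        using eg3[OF assms(1), of "i-1" j] assms i1 by simp
      have "i - 1 + 1 = i" "i-1-1 = i-2" using assms by auto
      then show ?thesis using 3 R False i1 by auto
    qed
  qed
qed

lemma agree:
  assumes "enhanced_GZ n lam a C E1" "efficient n a E1"
    "enhanced_GZ n lam a C E2" "efficient n a E2"
  shows "\<forall>j. 1 \<le> i \<and> i < n \<and> 1 \<le> j \<and> j \<le> n - i \<longrightarrow>
     (((i,j),(i-1,j)) \<in> E1 \<longleftrightarrow> ((i,j),(i-1,j)) \<in> E2) \<and>
     (((i,j),(i-1,j+1)) \<in> E1 \<longleftrightarrow> ((i,j),(i-1,j+1)) \<in> E2)"
proof (induction i rule: less_induct)
  case (less i)
  show ?case
  proof (intro allI impI)
    fix j assume h: "1 \<le> i \<and> i < n \<and> 1 \<le> j \<and> j \<le> n - i"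
    have R: "((i,j),(i-1,j+1)) \<in> E1 \<longleftrightarrow> ((i,j),(i-1,j+1)) \<in> E2"
      using charR[OF assms(1,2), of i j] charR[OF assms(3,4), of i j] h by simp
    have L: "((i,j),(i-1,j)) \<in> E1 \<longleftrightarrow> ((i,j),(i-1,j)) \<in> E2"
    proof (cases "i = 1")
      case True thus ?thesis
        using charL[OF assms(1,2), of i j] charL[OF assms(3,4), of i j] h by simp
    next
      case False
      have IH: "\<forall>j. 1 \<le> i-1 \<and> i-1 < n \<and> 1 \<le> j \<and> j \<le> n - (i-1) \<longrightarrow>
     (((i-1,j),(i-1-1,j)) \<in> E1 \<longleftrightarrow> ((i-1,j),(i-1-1,j)) \<in> E2) \<and>
     (((i-1,j),(i-1-1,j+1)) \<in> E1 \<longleftrightarrow> ((i-1,j),(i-1-1,j+1)) \<in> E2)"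
        using less.IH[of "i-1"] h False by simp
      have c1: "1 \<le> i-1 \<and> i-1 < n \<and> 1 \<le> j \<and> j \<le> n - (i-1)"
        and c2: "1 \<le> i-1 \<and> i-1 < n \<and> 1 \<le> j+1 \<and> j+1 \<le> n - (i-1)" using h False by auto
      have IH1: "((i-1,j),(i-1-1,j+1)) \<in> E1 \<longleftrightarrow> ((i-1,j),(i-1-1,j+1)) \<in> E2"
        using mp[OF spec[OF IH, of j] c1] by blast
      have IH2: "((i-1,j+1),(i-1-1,j+1)) \<in> E1 \<longleftrightarrow> ((i-1,j+1),(i-1-1,j+1)) \<in> E2"
        using mp[OF spec[OF IH, of "j+1"] c2] by blast
      have "i-1-1 = i-2" by simp
      thus ?thesis using charL[OF assms(1,2), of i j] charL[OF assms(3,4), of i j] h IH1 IH2 False by simp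
    qed
    show "(((i,j),(i-1,j)) \<in> E1 \<longleftrightarrow> ((i,j),(i-1,j)) \<in> E2) \<and>
     (((i,j),(i-1,j+1)) \<in> E1 \<longleftrightarrow> ((i,j),(i-1,j+1)) \<in> E2)" using L R by blast
  qed
qed

lemma sub:
  assumes "enhanced_GZ n lam a C E1" "efficient n a E1"
    "enhanced_GZ n lam a C E2" "efficient n a E2"
  shows "E1 \<subseteq> E2"
proof
  fix e assume "e \<in> E1"
  then have "valid_edge n e" using assms(1) unfolding enhanced_GZ_def by blast
  then obtain i j where ij: "1 \<le> i \<and> i < n \<and> 1 \<le> j \<and> j \<le> n - i"
    "e = ((i,j),(i-1,j)) \<or> e = ((i,j),(i-1,j+1))" unfolding valid_edge_def by blast
  show "e \<in> E2" using agree[OF assms, of i] ij \<open>e \<in> E1\<close> by blast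
qed

theorem lemma4p2:
  fixes n :: nat and lam :: "nat \<Rightarrow> int" and a :: "nat \<Rightarrow> nat \<Rightarrow> int"
    and C :: "(nat \<times> nat) set"
    and E1 E2 :: "((nat \<times> nat) \<times> (nat \<times> nat)) set"
  assumes "is_partition n lam"
    and "enhanced_GZ n lam a C E1" and "efficient n a E1"
    and "enhanced_GZ n lam a C E2" and "efficient n a E2"
  shows "E1 = E2"
  using sub[OF assms(2-5)] sub[OF assms(4,5,2,3)] by blast

end
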